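(* Let $A$ be a unital C$^*$-algebra with the QTS property. Assume that $A$ has a unique tracial state and that this tracial state is faithful. Then $A$ is simple.
   Context: A unital C$^*$-algebra $A$ has the QTS property if for every proper closed two-sided ideal $J$ of $A$, the quotient $A/J$ admits a tracial state. *)

theory Defs
  imports Complex_Main
begin

class cstar_algebra_1 = real_normed_algebra_1 + banach +
  fixes scaleC :: "complex \<Rightarrow> 'a \<Rightarrow> 'a"
    and cstar :: "'a \<Rightarrow> 'a"
  assumes scaleC_add_right: "scaleC c (x + y) = scaleC c x + scaleC c y"
    and scaleC_add_left: "scaleC (c + d) x = scaleC c x + scaleC d x"
    and scaleC_scaleC: "scaleC c (scaleC d x) = scaleC (c * d) x"
    and scaleC_one: "scaleC 1 x = x"
    and scaleR_scaleC: "scaleR r x = scaleC (complex_of_real r) x"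
    and norm_scaleC: "norm (scaleC c x) = cmod c * norm x"
    and mult_scaleC_left: "scaleC c x * y = scaleC c (x * y)"
    and mult_scaleC_right: "x * scaleC c y = scaleC c (x * y)"
    and cstar_cstar: "cstar (cstar x) = x"
    and cstar_add: "cstar (x + y) = cstar x + cstar y"
    and cstar_scaleC: "cstar (scaleC c x) = scaleC (cnj c) (cstar x)"
    and cstar_mult: "cstar (x * y) = cstar y * cstar x"
    and cstar_identity: "norm (cstar x * x) = norm x * norm x"

definition closed_ideal :: "'a::cstar_algebra_1 set \<Rightarrow> bool" where
  "closed_ideal J \<longleftrightarrow>
     0 \<in> J \<and> (\<forall>x\<in>J. \<forall>y\<in>J. x + y \<in> J) \<and> (\<forall>c. \<forall>x\<in>J. scaleC c x \<in> J) \<and>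
     (\<forall>a. \<forall>x\<in>J. a * x \<in> J \<and> x * a \<in> J) \<and> closed J"

definition proper_closed_ideal :: "'a::cstar_algebra_1 set \<Rightarrow> bool" where
  "proper_closed_ideal J \<longleftrightarrow> closed_ideal J \<and> J \<noteq> UNIV"

definition simple_cstar :: "'a::cstar_algebra_1 itself \<Rightarrow> bool" where
  "simple_cstar _ \<longleftrightarrow> (\<forall>J::'a set. closed_ideal J \<longrightarrow> J = {0} \<or> J = UNIV)"

text \<open>Elements of A/J are cosets q(a) = a + J. Every notion on A/J below is
  the corresponding notion in the quotient C*-algebra written out on
  representatives: q(a) = q(b) iff a - b in J; q(a) is invertible in A/J iff
  there is b with a*b - 1 and b*a - 1 in J; q(a)* = q(a*).
  For J = {0} these are the notions in A itself.\<close>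

definition invertible_mod :: "'a::cstar_algebra_1 set \<Rightarrow> 'a \<Rightarrow> bool" where
  "invertible_mod J a \<longleftrightarrow> (\<exists>b. a * b - 1 \<in> J \<and> b * a - 1 \<in> J)"

definition spectrum_mod :: "'a::cstar_algebra_1 set \<Rightarrow> 'a \<Rightarrow> complex set" where
  "spectrum_mod J a = {l. \<not> invertible_mod J (a - scaleC l 1)}"

definition positive_mod :: "'a::cstar_algebra_1 set \<Rightarrow> 'a \<Rightarrow> bool" where
  "positive_mod J a \<longleftrightarrow> cstar a - a \<in> J \<and>
     (\<forall>l\<in>spectrum_mod J a. l \<in> \<real> \<and> Re l \<ge> 0)"

text \<open>A tracial state on A/J, given as the function tau o q on A (q the
  quotient map): well defined on cosets, complex linear, positive, unital,
  tracial.\<close>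
definition tracial_state_mod :: "'a::cstar_algebra_1 set \<Rightarrow> ('a \<Rightarrow> complex) \<Rightarrow> bool" where
  "tracial_state_mod J \<tau> \<longleftrightarrow>
     (\<forall>x y. x - y \<in> J \<longrightarrow> \<tau> x = \<tau> y) \<and>
     (\<forall>x y. \<tau> (x + y) = \<tau> x + \<tau> y) \<and>
     (\<forall>c x. \<tau> (scaleC c x) = c * \<tau> x) \<and>
     (\<forall>a. positive_mod J a \<longrightarrow> \<tau> a \<in> \<real> \<and> Re (\<tau> a) \<ge> 0) \<and>
     \<tau> 1 = 1 \<and>
     (\<forall>x y. \<tau> (x * y) = \<tau> (y * x))"

definition tracial_state :: "('a::cstar_algebra_1 \<Rightarrow> complex) \<Rightarrow> bool" where
  "tracial_state \<tau> \<longleftrightarrow> tracial_state_mod {0} \<tau>"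

definition positive :: "'a::cstar_algebra_1 \<Rightarrow> bool" where
  "positive a \<longleftrightarrow> positive_mod {0} a"

definition faithful :: "('a::cstar_algebra_1 \<Rightarrow> complex) \<Rightarrow> bool" where
  "faithful \<tau> \<longleftrightarrow> (\<forall>a. positive a \<and> \<tau> a = 0 \<longrightarrow> a = 0)"

definition QTS :: "'a::cstar_algebra_1 itself \<Rightarrow> bool" where
  "QTS _ \<longleftrightarrow> (\<forall>J::'a set. proper_closed_ideal J \<longrightarrow> (\<exists>\<tau>. tracial_state_mod J \<tau>))"

end

theory Submission
  imports Defs
begin

lemma neumann:
  fixes z :: "'a::{banach,real_normed_algebra_1}"
  assumes "norm z < 1"
  shows "\<exists>b. (1 - z) * b = 1 \<and> b * (1 - z) = 1"
proof -
  have sg: "summable (\<lambda>n. norm z ^ n)" using assms by (intro summable_geometric) simp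
  have sm: "summable (\<lambda>n. z ^ n)"
    by (rule summable_comparison_test[OF _ sg]) (auto intro: norm_power_ineq)
  define s where "s = suminf (\<lambda>n. z ^ n)"
  have ss: "(\<lambda>n. z ^ n) sums s" using sm s_def summable_sums by blast
  have z0: "(\<lambda>n. z ^ n) \<longlonglongrightarrow> 0" using summable_LIMSEQ_zero[OF sm] .
  have tel: "(\<lambda>n. z ^ n - z ^ Suc n) sums (z ^ 0 - 0)" using telescope_sums'[OF z0] .
  have "(\<lambda>n. (1 - z) * z ^ n) sums ((1 - z) * s)" using sums_mult[OF ss] .
  moreover have "(\<lambda>n. (1 - z) * z ^ n) = (\<lambda>n. z ^ n - z ^ Suc n)"
    by (auto simp: algebra_simps)
  ultimately have 1: "(1 - z) * s = 1" using tel sums_unique2 by fastforce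
  have "(\<lambda>n. z ^ n * (1 - z)) sums (s * (1 - z))" using sums_mult2[OF ss] .
  moreover have "(\<lambda>n. z ^ n * (1 - z)) = (\<lambda>n. z ^ n - z ^ Suc n)"
    by (auto simp: algebra_simps power_commutes)
  ultimately have 2: "s * (1 - z) = 1" using tel sums_unique2 by fastforce
  show ?thesis using 1 2 by blast
qed

context cstar_algebra_1
begin

lemma scaleC_zero_right[simp]: "scaleC c 0 = 0"
  using scaleC_add_right[of c 0 0] by simp

lemma scaleC_zero_left[simp]: "scaleC 0 x = 0"
  using scaleC_add_left[of 0 0 x] by simp

lemma scaleC_minus_right: "scaleC c (- x) = - scaleC c x"
proof -
  have "scaleC c x + scaleC c (- x) = 0" using scaleC_add_right[of c x "- x"] by simp
  then show ?thesis by (metis minus_unique)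
qed

lemma scaleC_minus_left: "scaleC (- c) x = - scaleC c x"
proof -
  have "scaleC c x + scaleC (- c) x = 0" using scaleC_add_left[of c "- c" x] by simp
  then show ?thesis by (metis minus_unique)
qed

lemma scaleC_diff_right: "scaleC c (x - y) = scaleC c x - scaleC c y"
  using scaleC_add_right[of c x "- y"] by (simp add: scaleC_minus_right)

lemma scaleC_diff_left: "scaleC (c - d) x = scaleC c x - scaleC d x"
  using scaleC_add_left[of c "- d" x] by (simp add: scaleC_minus_left)

lemma cstar_one[simp]: "cstar 1 = 1"
proof -
  have "cstar (cstar 1 * 1) = cstar 1 * cstar (cstar 1)" by (rule cstar_mult)
  then show ?thesis by (simp add: cstar_cstar)
qed

lemma cstar_zero[simp]: "cstar 0 = 0"
  using cstar_add[of 0 0] by simp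

lemma mult_scaleC_one_right[simp]: "x * scaleC c 1 = scaleC c x"
  by (simp add: mult_scaleC_right)

lemma mult_scaleC_one_left[simp]: "scaleC c 1 * x = scaleC c x"
  by (simp add: mult_scaleC_left)

end

lemma spec_bound:
  fixes y :: "'a::cstar_algebra_1"
  assumes "norm y < cmod l"
  shows "\<exists>b. (y - scaleC l 1) * b = 1 \<and> b * (y - scaleC l 1) = 1"
proof -
  have l0: "l \<noteq> 0" using assms norm_ge_zero[of y] by auto
  define z where "z = scaleC (1 / l) y"
  have "norm z = norm y / cmod l" by (simp add: z_def norm_scaleC norm_divide)
  also have "\<dots> < 1" using assms l0 by simp
  finally obtain b where b: "(1 - z) * b = 1" "b * (1 - z) = 1" using neumann[of z] by blast
  have eq: "y - scaleC l 1 = scaleC (- l) (1 - z)"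
    using l0 by (simp add: z_def scaleC_diff_right scaleC_scaleC scaleC_minus_left scaleC_one)
  have "(y - scaleC l 1) * scaleC (- 1 / l) b = 1"
    using l0 by (simp add: eq mult_scaleC_left mult_scaleC_right scaleC_scaleC b scaleC_one)
  moreover have "scaleC (- 1 / l) b * (y - scaleC l 1) = 1"
    using l0 by (simp add: eq mult_scaleC_left mult_scaleC_right scaleC_scaleC b scaleC_one)
  ultimately show ?thesis by blast
qed

lemma sa_real:
  fixes h :: "'a::cstar_algebra_1"
  assumes sa: "cstar h = h"
    and ni: "\<not> (\<exists>b. (h - scaleC l 1) * b = 1 \<and> b * (h - scaleC l 1) = 1)"
  shows "Im l = 0"
proof (rule ccontr)
  assume b: "Im l \<noteq> 0"
  have key: "(Re l)^2 + (Im l + t)^2 \<le> (norm h)^2 + t^2" for t :: real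
  proof -
    define y where "y = h + scaleC (\<i> * t) 1"
    have "y - scaleC (l + \<i> * t) 1 = h - scaleC l 1"
      by (simp add: y_def scaleC_add_left algebra_simps)
    hence "\<not> (norm y < cmod (l + \<i> * t))" using spec_bound[of y "l + \<i> * t"] ni by metis
    hence n1: "cmod (l + \<i> * t) \<le> norm y" by simp
    have cy: "cstar y = h + scaleC (- (\<i> * t)) 1"
      by (simp add: y_def cstar_add cstar_scaleC sa)
    have "cstar y * y = h * h + (scaleC (\<i> * t) h + scaleC (- (\<i> * t)) h)
        + scaleC (- (\<i> * t)) (scaleC (\<i> * t) 1)"
      unfolding cy by (simp add: y_def algebra_simps scaleC_add_right scaleC_scaleC)
    also have "\<dots> = h * h + scaleC (complex_of_real (t^2)) 1"
    proof -
      have "- (\<i> * complex_of_real t * (\<i> * complex_of_real t)) = complex_of_real t * complex_of_real t"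
        by (simp add: algebra_simps)
      then show ?thesis by (simp add: scaleC_add_left[symmetric] scaleC_scaleC power2_eq_square)
    qed
    finally have cyy: "cstar y * y = h * h + scaleC (complex_of_real (t^2)) 1" .
    have "norm y * norm y = norm (h * h + scaleC (complex_of_real (t^2)) 1)"
      using cstar_identity[of y] cyy by simp
    also have "\<dots> \<le> norm (h * h) + norm (scaleC (complex_of_real (t^2)) (1::'a))"
      by (metis norm_triangle_ineq)
    also have "\<dots> \<le> norm h * norm h + t^2"
    proof -
      have "cmod ((complex_of_real t)^2) = t^2"
        by (metis norm_of_real of_real_power abs_power2 real_norm_def)
      then show ?thesis by (simp add: norm_scaleC norm_mult_ineq)
    qed
    finally have n2: "norm y * norm y \<le> norm h * norm h + t^2" .
    have "(cmod (l + \<i> * t))^2 \<le> (norm y)^2"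
      using n1 by (simp add: power_mono)
    moreover have "(cmod (l + \<i> * t))^2 = (Re l)^2 + (Im l + t)^2"
      by (simp add: cmod_power2)
    ultimately show ?thesis using n2 by (simp add: power2_eq_square)
  qed
  define t where "t = ((norm h)^2 + 1) / (2 * Im l)"
  have t2: "2 * Im l * t = (norm h)^2 + 1" using b by (simp add: t_def)
  have "(Re l)^2 + (Im l)^2 + 2 * Im l * t + t^2 \<le> (norm h)^2 + t^2"
    using key[of t] by (simp add: power2_sum)
  moreover have "(Re l)^2 \<ge> 0" "(Im l)^2 \<ge> 0" by simp_all
  ultimately show False using t2 by linarith
qed

lemma sq_pos:
  fixes h :: "'a::cstar_algebra_1"
  assumes sa: "cstar h = h" and nl: "\<not> (l \<in> \<real> \<and> Re l \<ge> 0)"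
  shows "\<exists>b. (h * h - scaleC l 1) * b = 1 \<and> b * (h * h - scaleC l 1) = 1"
proof -
  define m where "m = csqrt l"
  have mm: "m * m = l" unfolding m_def by (metis power2_csqrt power2_eq_square)
  have im: "Im m \<noteq> 0"
  proof
    assume "Im m = 0"
    then have "m = complex_of_real (Re m)" by (simp add: complex_eq_iff)
    then have "l = complex_of_real ((Re m)^2)" using mm by (metis of_real_mult power2_eq_square)
    then show False using nl by simp
  qed
  obtain b1 where b1: "(h - scaleC m 1) * b1 = 1" "b1 * (h - scaleC m 1) = 1"
    using sa_real[OF sa, of m] im by blast
  obtain b2 where b2: "(h - scaleC (- m) 1) * b2 = 1" "b2 * (h - scaleC (- m) 1) = 1"
    using sa_real[OF sa, of "- m"] im by fastforce
  have fac: "h * h - scaleC l 1 = (h - scaleC m 1) * (h - scaleC (- m) 1)"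
    by (simp add: algebra_simps scaleC_minus_left scaleC_scaleC mm[symmetric] scaleC_diff_right)
  have "(h * h - scaleC l 1) * (b2 * b1) = 1"
    unfolding fac by (metis b1(1) b2(1) mult.assoc mult_1_left)
  moreover have "(b2 * b1) * (h * h - scaleC l 1) = 1"
    unfolding fac by (metis b1(2) b2(2) mult.assoc mult_1_left)
  ultimately show ?thesis by blast
qed

lemma tracial_state_of_mod:
  fixes J :: "'a::cstar_algebra_1 set"
  assumes "closed_ideal J" "tracial_state_mod J \<tau>"
  shows "tracial_state \<tau>"
proof -
  have J0: "0 \<in> J" using assms(1) by (simp add: closed_ideal_def)
  have inv: "invertible_mod {0} a \<Longrightarrow> invertible_mod J a" for a
    using J0 unfolding invertible_mod_def by (metis diff_self singletonD)
  have pos: "positive_mod {0} a \<Longrightarrow> positive_mod J a" for a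
    using J0 inv by (auto simp: positive_mod_def spectrum_mod_def)
  show ?thesis using assms(2) pos
    unfolding tracial_state_def tracial_state_mod_def by auto
qed

theorem theorem2p2:
  assumes "QTS TYPE('a::cstar_algebra_1)"
    and "\<exists>!\<tau>::'a \<Rightarrow> complex. tracial_state \<tau>"
    and "\<forall>\<tau>::'a \<Rightarrow> complex. tracial_state \<tau> \<longrightarrow> faithful \<tau>"
  shows "simple_cstar TYPE('a)"
  unfolding simple_cstar_def
proof (intro allI impI)
  fix J :: "'a set"
  assume cJ: "closed_ideal J"
  show "J = {0} \<or> J = UNIV"
  proof (rule ccontr)
    assume nJ: "\<not> (J = {0} \<or> J = UNIV)"
    then have "proper_closed_ideal J" using cJ by (simp add: proper_closed_ideal_def)
    then obtain \<tau> where tJ: "tracial_state_mod J \<tau>"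
      using assms(1) by (auto simp: QTS_def)
    have ts: "tracial_state \<tau>" by (rule tracial_state_of_mod[OF cJ tJ])
    then have fa: "faithful \<tau>" using assms(3) by blast
    have J0: "0 \<in> J" using cJ by (simp add: closed_ideal_def)
    obtain x where xJ: "x \<in> J" and x0: "x \<noteq> 0" using nJ J0 by blast
    define h where "h = cstar x * x"
    have hJ: "h \<in> J" using cJ xJ by (simp add: closed_ideal_def h_def)
    have h0: "h \<noteq> 0"
    proof
      assume "h = 0"
      then have "norm x * norm x = 0" using cstar_identity[of x] by (simp add: h_def)
      then show False using x0 by simp
    qed
    have sa: "cstar h = h" by (simp add: h_def cstar_mult cstar_cstar)
    define a where "a = h * h"
    have aJ: "a \<in> J" using cJ hJ by (simp add: closed_ideal_def a_def)
    have a0: "a \<noteq> 0"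
    proof
      assume "a = 0"
      then have "norm h * norm h = 0" using cstar_identity[of h] sa by (simp add: a_def)
      then show False using h0 by simp
    qed
    have "positive a"
      unfolding positive_def positive_mod_def
    proof
      show "cstar a - a \<in> {0}" using sa by (simp add: a_def cstar_mult)
      show "\<forall>l\<in>spectrum_mod {0} a. l \<in> \<real> \<and> 0 \<le> Re l"
      proof
        fix l assume "l \<in> spectrum_mod {0} a"
        then have "\<not> invertible_mod {0} (a - scaleC l 1)" by (simp add: spectrum_mod_def)
        then show "l \<in> \<real> \<and> 0 \<le> Re l"
          using sq_pos[OF sa, of l] by (auto simp: invertible_mod_def a_def)
      qed
    qed
    moreover have "\<tau> a = 0"
    proof -
      have "\<tau> a = \<tau> 0" using tJ aJ by (simp add: tracial_state_mod_def)
      moreover have "\<tau> 0 = \<tau> 0 + \<tau> 0" using tJ unfolding tracial_state_mod_def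
        by (metis add_0)
      ultimately show ?thesis by simp
    qed
    ultimately show False using fa a0 by (auto simp: faithful_def)
  qed
qed

end
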